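(* Let $\gamma(t,s)$ be a smooth solution of $\gamma_t=\gamma_s\times\gamma_{ss}$ in $\mathrm{Im}(\mathbb O)$ with $|\gamma_s|=1$, $k_1>0$, $\kappa_2>0$ everywhere, and suppose $\varphi_3=0$ and $\varphi_2\neq0$. Then the coefficients of the second fundamental form of the surface $\Sigma$ swept by $\gamma$ with respect to the frame $\tilde E_1,\dots,\tilde E_7$ satisfy $\tilde h^6_{ij}=\tilde h^7_{ij}=0$ for all $i,j\in\{1,2\}$; that is, the normal bundle of $\Sigma$ is flat in the directions $\tilde E_6,\tilde E_7$.
   Context: $\mathbb O$: octonions (product $(a+bl)(c+dl)=(ac-d\bar b)+(\bar a d+cb)l$ for quaternions), $\langle x,y\rangle=\frac12(\bar xy+\bar yx)$, $\mathrm{Im}(\mathbb O)\cong\mathbb R^7$, $x\times y=\frac12(\bar yx-\bar xy)$. For each $t$ (with $s$ in an interval containing $0$): $I_4=\gamma_s$, $k_1=\|\gamma_{ss}\|$, $I_1=I_{4s}/k_1$, $I_5=I_1\times I_4$, $\kappa_2=\sqrt{\|I_{1s}\|^2-\langle I_{1s},I_4\rangle^2-\langle I_{1s},I_5\rangle^2}$, $I_2=\kappa_2^{-1}(I_{1s}-\langle I_{1s},I_4\rangle I_4-\langle I_{1s},I_5\rangle I_5)$, $I_3=I_1\times I_2$, $I_6=I_2\times I_4$, $I_7=I_3\times I_4$; $\rho_1=\langle I_{1s},I_5\rangle$, $\rho_2=\langle I_{2s},I_6\rangle$, $\alpha=\langle I_{2s},I_3\rangle$, $\beta_1=\langle I_{2s},I_7\rangle$,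 $\beta_2=\langle I_{3s},I_6\rangle$; $r=\frac1{\sqrt2}e^{-\sqrt{-1}\int_0^s\rho_1}$, $q=\frac1{\sqrt2}e^{-\sqrt{-1}\int_0^s\rho_2}$; $\varphi_1=k_1\overline r$, $\varphi_2=2\kappa_2r\overline q$, $\varphi_3=-\sqrt2q^2r[2\alpha+\sqrt{-1}(\beta_1+\beta_2)]$. Frame of $\Sigma$: $E_1=\gamma_s=I_4$, $E_2=\gamma_t/k_1=-I_5$, $E_3=I_1$, $E_4=I_2$, $E_5=I_6$, $E_6=I_3$, $E_7=I_7$, coframe $\omega^1=ds$, $\omega^2=\sqrt2|\varphi_1|dt$; for an orthonormal frame $(F_i)$ with $F_1=E_1$, $F_2=E_2$, coefficients $h^\alpha_{ij}$ are defined by $dF_i=\sum_{k\le2}\omega_i^kF_k+\sum_{\alpha\ge3}\omega_i^\alpha F_\alpha$, $\omega_i^\alpha=\sum_jh^\alpha_{ij}\omega^j$. Let $h^\alpha_{ij}$ be these for $F=E$, set $\theta=\arccos\frac{h^4_{22}}{\sqrt{(h^4_{22})^2+\frac94|\varphi_2|^2}}$, $\tilde E_i=E_i$ for $i\neq4,7$, $\tilde E_4=\cos\theta E_4-\sin\theta E_7$, $\tilde E_7=\sin\theta E_4+\cos\theta E_7$, and let $\tilde h^\alpha_{ij}$ be the coefficients for $F=\tilde E$. *)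

theory Defs
  imports "HOL-Analysis.Analysis"
begin

text \<open>A quaternion a0 + a1 i + a2 j + a3 k is the 4-tuple (a0,a1,a2,a3);
an octonion a + b l (a, b quaternions) is the pair (a,b).  Both carry the
Euclidean real normed vector structure of product types, so derivatives
of octonion-valued maps are the usual ones.\<close>

type_synonym quat = "real \<times> real \<times> real \<times> real"
type_synonym oct = "quat \<times> quat"

fun qmult :: "quat \<Rightarrow> quat \<Rightarrow> quat" where
  "qmult (a0,a1,a2,a3) (b0,b1,b2,b3) =
     (a0*b0 - a1*b1 - a2*b2 - a3*b3,
      a0*b1 + a1*b0 + a2*b3 - a3*b2,
      a0*b2 - a1*b3 + a2*b0 + a3*b1,
      a0*b3 + a1*b2 - a2*b1 + a3*b0)"

fun qconj :: "quat \<Rightarrow> quat" where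
  "qconj (a0,a1,a2,a3) = (a0, -a1, -a2, -a3)"

fun omult :: "oct \<Rightarrow> oct \<Rightarrow> oct" where
  "omult (a,b) (c,d) = (qmult a c - qmult d (qconj b), qmult (qconj a) d + qmult c b)"

fun oconj :: "oct \<Rightarrow> oct" where
  "oconj (a,b) = (qconj a, - b)"

definition ore :: "oct \<Rightarrow> real" where
  "ore x = fst (fst x)"

definition ofreal :: "real \<Rightarrow> oct" where
  "ofreal c = ((c,0,0,0), 0)"

definition ImO :: "oct set" where
  "ImO = {x. ore x = 0}"

text \<open><x,y> = (conj(x) y + conj(y) x)/2, which is a real octonion; we take that real.\<close>
definition oinner :: "oct \<Rightarrow> oct \<Rightarrow> real" where
  "oinner x y = ore ((1/2) *\<^sub>R (omult (oconj x) y + omult (oconj y) x))"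

definition onorm :: "oct \<Rightarrow> real" where
  "onorm x = sqrt (oinner x x)"

definition ocross :: "oct \<Rightarrow> oct \<Rightarrow> oct" where
  "ocross x y = (1/2) *\<^sub>R (omult (oconj y) x - omult (oconj x) y)"

definition ps :: "(real \<Rightarrow> real \<Rightarrow> oct) \<Rightarrow> real \<Rightarrow> real \<Rightarrow> oct" where
  "ps f t s = vector_derivative (\<lambda>\<sigma>. f t \<sigma>) (at s)"

definition pt :: "(real \<Rightarrow> real \<Rightarrow> oct) \<Rightarrow> real \<Rightarrow> real \<Rightarrow> oct" where
  "pt f t s = vector_derivative (\<lambda>\<tau>. f \<tau> s) (at t)"

text \<open>Iterated partial derivative; True = d/ds, False = d/dt.\<close>
fun pd :: "bool list \<Rightarrow> (real \<Rightarrow> real \<Rightarrow> oct) \<Rightarrow> real \<Rightarrow> real \<Rightarrow> oct" where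
  "pd [] f = f"
| "pd (b # bs) f = (if b then ps (pd bs f) else pt (pd bs f))"

definition smooth2_on :: "(real \<times> real) set \<Rightarrow> (real \<Rightarrow> real \<Rightarrow> oct) \<Rightarrow> bool" where
  "smooth2_on D f \<longleftrightarrow>
     (\<forall>ws. continuous_on D (\<lambda>(t,s). pd ws f t s) \<and>
       (\<forall>(t,s)\<in>D.
          ((\<lambda>\<sigma>. pd ws f t \<sigma>) has_vector_derivative ps (pd ws f) t s) (at s) \<and>
          ((\<lambda>\<tau>. pd ws f \<tau> s) has_vector_derivative pt (pd ws f) t s) (at t)))"

definition sint :: "(real \<Rightarrow> real) \<Rightarrow> real \<Rightarrow> real" where
  "sint f s = (if 0 \<le> s then integral {0..s} f else - integral {s..0} f)"

definition I4 :: "(real \<Rightarrow> real \<Rightarrow> oct) \<Rightarrow> real \<Rightarrow> real \<Rightarrow> oct" where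
  "I4 g = ps g"

definition k1 :: "(real \<Rightarrow> real \<Rightarrow> oct) \<Rightarrow> real \<Rightarrow> real \<Rightarrow> real" where
  "k1 g t s = onorm (ps (ps g) t s)"

definition I1 :: "(real \<Rightarrow> real \<Rightarrow> oct) \<Rightarrow> real \<Rightarrow> real \<Rightarrow> oct" where
  "I1 g t s = (1 / k1 g t s) *\<^sub>R ps (I4 g) t s"

definition I5 :: "(real \<Rightarrow> real \<Rightarrow> oct) \<Rightarrow> real \<Rightarrow> real \<Rightarrow> oct" where
  "I5 g t s = ocross (I1 g t s) (I4 g t s)"

definition kappa2 :: "(real \<Rightarrow> real \<Rightarrow> oct) \<Rightarrow> real \<Rightarrow> real \<Rightarrow> real" where
  "kappa2 g t s = sqrt ((onorm (ps (I1 g) t s))\<^sup>2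
      - (oinner (ps (I1 g) t s) (I4 g t s))\<^sup>2 - (oinner (ps (I1 g) t s) (I5 g t s))\<^sup>2)"

definition I2 :: "(real \<Rightarrow> real \<Rightarrow> oct) \<Rightarrow> real \<Rightarrow> real \<Rightarrow> oct" where
  "I2 g t s = (1 / kappa2 g t s) *\<^sub>R
      (ps (I1 g) t s - oinner (ps (I1 g) t s) (I4 g t s) *\<^sub>R I4 g t s
                     - oinner (ps (I1 g) t s) (I5 g t s) *\<^sub>R I5 g t s)"

definition I3 :: "(real \<Rightarrow> real \<Rightarrow> oct) \<Rightarrow> real \<Rightarrow> real \<Rightarrow> oct" where
  "I3 g t s = ocross (I1 g t s) (I2 g t s)"

definition I6 :: "(real \<Rightarrow> real \<Rightarrow> oct) \<Rightarrow> real \<Rightarrow> real \<Rightarrow> oct" where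
  "I6 g t s = ocross (I2 g t s) (I4 g t s)"

definition I7 :: "(real \<Rightarrow> real \<Rightarrow> oct) \<Rightarrow> real \<Rightarrow> real \<Rightarrow> oct" where
  "I7 g t s = ocross (I3 g t s) (I4 g t s)"

definition rho1 :: "(real \<Rightarrow> real \<Rightarrow> oct) \<Rightarrow> real \<Rightarrow> real \<Rightarrow> real" where
  "rho1 g t s = oinner (ps (I1 g) t s) (I5 g t s)"

definition rho2 :: "(real \<Rightarrow> real \<Rightarrow> oct) \<Rightarrow> real \<Rightarrow> real \<Rightarrow> real" where
  "rho2 g t s = oinner (ps (I2 g) t s) (I6 g t s)"

definition alpha :: "(real \<Rightarrow> real \<Rightarrow> oct) \<Rightarrow> real \<Rightarrow> real \<Rightarrow> real" where
  "alpha g t s = oinner (ps (I2 g) t s) (I3 g t s)"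

definition beta1 :: "(real \<Rightarrow> real \<Rightarrow> oct) \<Rightarrow> real \<Rightarrow> real \<Rightarrow> real" where
  "beta1 g t s = oinner (ps (I2 g) t s) (I7 g t s)"

definition beta2 :: "(real \<Rightarrow> real \<Rightarrow> oct) \<Rightarrow> real \<Rightarrow> real \<Rightarrow> real" where
  "beta2 g t s = oinner (ps (I3 g) t s) (I6 g t s)"

definition rr :: "(real \<Rightarrow> real \<Rightarrow> oct) \<Rightarrow> real \<Rightarrow> real \<Rightarrow> complex" where
  "rr g t s = complex_of_real (1 / sqrt 2) * exp (- \<i> * complex_of_real (sint (rho1 g t) s))"

definition qq :: "(real \<Rightarrow> real \<Rightarrow> oct) \<Rightarrow> real \<Rightarrow> real \<Rightarrow> complex" where
  "qq g t s = complex_of_real (1 / sqrt 2) * exp (- \<i> * complex_of_real (sint (rho2 g t) s))"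

definition phi1 :: "(real \<Rightarrow> real \<Rightarrow> oct) \<Rightarrow> real \<Rightarrow> real \<Rightarrow> complex" where
  "phi1 g t s = complex_of_real (k1 g t s) * cnj (rr g t s)"

definition phi2 :: "(real \<Rightarrow> real \<Rightarrow> oct) \<Rightarrow> real \<Rightarrow> real \<Rightarrow> complex" where
  "phi2 g t s = complex_of_real (2 * kappa2 g t s) * rr g t s * cnj (qq g t s)"

definition phi3 :: "(real \<Rightarrow> real \<Rightarrow> oct) \<Rightarrow> real \<Rightarrow> real \<Rightarrow> complex" where
  "phi3 g t s = - complex_of_real (sqrt 2) * (qq g t s)\<^sup>2 * rr g t s *
      (complex_of_real (2 * alpha g t s) + \<i> * complex_of_real (beta1 g t s + beta2 g t s))"

definition Efr :: "(real \<Rightarrow> real \<Rightarrow> oct) \<Rightarrow> nat \<Rightarrow> real \<Rightarrow> real \<Rightarrow> oct" where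
  "Efr g i = (if i = 1 then I4 g else if i = 2 then (\<lambda>t s. - I5 g t s)
              else if i = 3 then I1 g else if i = 4 then I2 g else if i = 5 then I6 g
              else if i = 6 then I3 g else I7 g)"

text \<open>Coframe: omega^1 = ds, omega^2 = w2 dt with w2 = sqrt 2 |phi1|.\<close>
definition w2 :: "(real \<Rightarrow> real \<Rightarrow> oct) \<Rightarrow> real \<Rightarrow> real \<Rightarrow> real" where
  "w2 g t s = sqrt 2 * cmod (phi1 g t s)"

text \<open>For an orthonormal frame F, omega_i^a = <dF_i, F_a> = h^a_{i1} ds + h^a_{i2} w2 dt,
  so h^a_{i1} = <d_s F_i, F_a> and h^a_{i2} = <d_t F_i, F_a> / w2.\<close>
definition hcoef :: "(real \<Rightarrow> real \<Rightarrow> oct) \<Rightarrow> (nat \<Rightarrow> real \<Rightarrow> real \<Rightarrow> oct)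
                     \<Rightarrow> nat \<Rightarrow> nat \<Rightarrow> nat \<Rightarrow> real \<Rightarrow> real \<Rightarrow> real" where
  "hcoef g F a i j t s =
     (if j = 1 then oinner (ps (F i) t s) (F a t s)
      else oinner (pt (F i) t s) (F a t s) / w2 g t s)"

definition theta :: "(real \<Rightarrow> real \<Rightarrow> oct) \<Rightarrow> real \<Rightarrow> real \<Rightarrow> real" where
  "theta g t s = arccos (hcoef g (Efr g) 4 2 2 t s /
      sqrt ((hcoef g (Efr g) 4 2 2 t s)\<^sup>2 + 9/4 * (cmod (phi2 g t s))\<^sup>2))"

definition Etil :: "(real \<Rightarrow> real \<Rightarrow> oct) \<Rightarrow> nat \<Rightarrow> real \<Rightarrow> real \<Rightarrow> oct" where
  "Etil g i = (if i = 4 then (\<lambda>t s. cos (theta g t s) *\<^sub>R Efr g 4 t s - sin (theta g t s) *\<^sub>R Efr g 7 t s)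
               else if i = 7 then (\<lambda>t s. sin (theta g t s) *\<^sub>R Efr g 4 t s + cos (theta g t s) *\<^sub>R Efr g 7 t s)
               else Efr g i)"

end

theory Submission
  imports Defs
begin


lemma oinner_eq: "oinner x y = inner x y"
  by (cases x; cases y) (auto simp: oinner_def ore_def inner_prod_def split: prod.splits; simp add: algebra_simps)

lemma onorm_eq: "onorm x = norm x"
  by (simp add: onorm_def oinner_eq norm_eq_sqrt_inner)

lemma ocross_add_left: "ocross (x + y) z = ocross x z + ocross y z"
  by (cases x; cases y; cases z) (auto simp: ocross_def split: prod.splits; simp add: field_simps)

lemma ocross_scale_left: "ocross (r *\<^sub>R x) z = r *\<^sub>R ocross x z"
  by (cases x; cases z) (auto simp: ocross_def split: prod.splits; simp add: field_simps)

lemma ocross_anti: "ocross x y = - ocross y x"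
  by (cases x; cases y) (auto simp: ocross_def split: prod.splits; simp add: field_simps)

lemma ocross_Im: "ocross x y \<in> ImO"
  by (cases x; cases y) (auto simp: ocross_def ImO_def ore_def split: prod.splits; simp add: field_simps)

lemma G1: "x \<in> ImO \<Longrightarrow> y \<in> ImO \<Longrightarrow> z \<in> ImO \<Longrightarrow> inner (ocross x y) z = inner x (ocross y z)"
  by (cases x; cases y; cases z) (auto simp: ocross_def ImO_def ore_def inner_prod_def split: prod.splits; simp add: field_simps)

lemma G2: "x \<in> ImO \<Longrightarrow> y \<in> ImO \<Longrightarrow> ocross x (ocross x y) = inner y x *\<^sub>R x - inner x x *\<^sub>R y"
  by (cases x; cases y) (auto simp: ocross_def ImO_def ore_def inner_prod_def split: prod.splits; simp add: field_simps)

lemma G3: "x \<in> ImO \<Longrightarrow> y \<in> ImO \<Longrightarrow> z \<in> ImO \<Longrightarrow>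
   ocross x (ocross y z) + ocross (ocross x y) z = (2 * inner x z) *\<^sub>R y - inner x y *\<^sub>R z - inner y z *\<^sub>R x"
  by (cases x; cases y; cases z) (auto simp: ocross_def ImO_def ore_def inner_prod_def split: prod.splits; simp add: field_simps)

lemma G4: "x \<in> ImO \<Longrightarrow> y \<in> ImO \<Longrightarrow> z \<in> ImO \<Longrightarrow>
   inner (ocross x y) (ocross x z) = inner x x * inner y z - inner x y * inner x z"
  by (cases x; cases y; cases z) (auto simp: ocross_def ImO_def ore_def inner_prod_def split: prod.splits; simp add: field_simps)


lemma schwarz:
  fixes f ft fs fts fst :: "real \<Rightarrow> real \<Rightarrow> 'a::euclidean_space"
  assumes T: "open T" and S: "open S" "is_interval S"
    and ft: "\<And>\<tau> \<sigma>. \<tau> \<in> T \<Longrightarrow> \<sigma> \<in> S \<Longrightarrow> ((\<lambda>\<tau>. f \<tau> \<sigma>) has_vector_derivative ft \<tau> \<sigma>) (at \<tau>)"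
    and fts: "\<And>\<tau> \<sigma>. \<tau> \<in> T \<Longrightarrow> \<sigma> \<in> S \<Longrightarrow> ((\<lambda>\<sigma>. ft \<tau> \<sigma>) has_vector_derivative fts \<tau> \<sigma>) (at \<sigma>)"
    and fs: "\<And>\<tau> \<sigma>. \<tau> \<in> T \<Longrightarrow> \<sigma> \<in> S \<Longrightarrow> ((\<lambda>\<sigma>. f \<tau> \<sigma>) has_vector_derivative fs \<tau> \<sigma>) (at \<sigma>)"
    and fst: "\<And>\<tau> \<sigma>. \<tau> \<in> T \<Longrightarrow> \<sigma> \<in> S \<Longrightarrow> ((\<lambda>\<tau>. fs \<tau> \<sigma>) has_vector_derivative fst \<tau> \<sigma>) (at \<tau>)"
    and cont: "continuous_on (T \<times> S) (\<lambda>(\<tau>,\<sigma>). fts \<tau> \<sigma>)"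
    and t0: "t0 \<in> T" and s0: "s0 \<in> S"
  shows "fst t0 s0 = fts t0 s0"
proof -
  obtain e where e: "e > 0" "ball t0 e \<subseteq> T" using T t0 open_contains_ball by blast
  define a where "a = t0 - e/2"
  define b where "b = t0 + e/2"
  have ab: "{a..b} \<subseteq> T" using e unfolding a_def b_def
    by (auto simp: subset_iff dist_real_def)
  have t0ab: "t0 \<in> {a<..<b}" using e by (auto simp: a_def b_def)
  have contr: "continuous_on ({a..b} \<times> S) (\<lambda>(\<tau>,\<sigma>). fts \<tau> \<sigma>)"
    by (rule continuous_on_subset[OF cont]) (use ab in auto)
  have key: "fs \<tau> s0 = fs a s0 + integral {a..\<tau>} (\<lambda>r. fts r s0)" if \<tau>: "\<tau> \<in> {a..b}" for \<tau>
  proof -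
    have sub: "{a..\<tau>} \<subseteq> T" using ab \<tau> by auto
    have hi: "((\<lambda>r. ft r \<sigma>) has_integral (f \<tau> \<sigma> - f a \<sigma>)) {a..\<tau>}" if \<sigma>: "\<sigma> \<in> S" for \<sigma>
      apply (rule fundamental_theorem_of_calculus)
      using \<tau> apply simp
      using sub \<sigma> by (intro has_vector_derivative_at_within[OF ft]) auto
    have ftc: "f \<tau> \<sigma> = f a \<sigma> + integral {a..\<tau>} (\<lambda>r. ft r \<sigma>)" if \<sigma>: "\<sigma> \<in> S" for \<sigma>
      using hi[OF \<sigma>] by (simp add: integral_unique)
    have lb: "((\<lambda>\<sigma>. integral (cbox a \<tau>) (\<lambda>r. ft r \<sigma>)) has_vector_derivative
               integral (cbox a \<tau>) (\<lambda>r. fts r s0)) (at s0 within S)"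
    proof (rule leibniz_rule_vector_derivative[where f="\<lambda>\<sigma> r. ft r \<sigma>" and fx="\<lambda>\<sigma> r. fts r \<sigma>"])
      show "((\<lambda>x. ft t x) has_vector_derivative fts t x) (at x within S)" if "x \<in> S" "t \<in> cbox a \<tau>" for x t
        using that sub by (intro has_vector_derivative_at_within[OF fts]) auto
      show "(\<lambda>r. ft r x) integrable_on cbox a \<tau>" if "x \<in> S" for x
        using hi[OF that] by auto
      show "continuous_on (S \<times> cbox a \<tau>) (\<lambda>(x, t). fts t x)"
      proof -
        have "continuous_on (S \<times> cbox a \<tau>) ((\<lambda>(\<tau>,\<sigma>). fts \<tau> \<sigma>) \<circ> (\<lambda>(x,t). (t,x)))"
          apply (rule continuous_on_compose)
           apply (auto intro!: continuous_intros simp: split_beta)[1]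
          apply (rule continuous_on_subset[OF cont])
          using sub by auto
        then show ?thesis by (simp add: o_def split_beta)
      qed
      show "s0 \<in> S" by (rule s0)
      show "convex S" using S(2) by (rule is_interval_convex)
    qed
    then have lb': "((\<lambda>\<sigma>. f a \<sigma> + integral {a..\<tau>} (\<lambda>r. ft r \<sigma>)) has_vector_derivative
               fs a s0 + integral {a..\<tau>} (\<lambda>r. fts r s0)) (at s0)"
    proof -
      have lb2: "((\<lambda>\<sigma>. integral {a..\<tau>} (\<lambda>r. ft r \<sigma>)) has_vector_derivative
               integral {a..\<tau>} (\<lambda>r. fts r s0)) (at s0)"
        using lb at_within_open[OF s0 S(1)] by (simp only: cbox_interval)
      have "a \<in> T" using ab t0ab by auto
      show ?thesis by (rule has_vector_derivative_add[OF fs[OF \<open>a \<in> T\<close> s0] lb2])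
    qed
    have "((\<lambda>\<sigma>. f \<tau> \<sigma>) has_vector_derivative fs a s0 + integral {a..\<tau>} (\<lambda>r. fts r s0)) (at s0)"
      by (rule has_vector_derivative_transform_within_open[OF lb' S(1) s0]) (simp add: ftc)
    then show ?thesis using fs[of \<tau> s0] \<tau> ab s0 vector_derivative_unique_at by blast
  qed
  have c1: "continuous_on {a..b} (\<lambda>r. fts r s0)"
  proof -
    have "continuous_on {a..b} ((\<lambda>(\<tau>,\<sigma>). fts \<tau> \<sigma>) \<circ> (\<lambda>r. (r,s0)))"
      apply (rule continuous_on_compose)
       apply (auto intro!: continuous_intros)[1]
      apply (rule continuous_on_subset[OF contr]) using s0 by auto
    then show ?thesis by (simp add: o_def)
  qed
  have "((\<lambda>u. integral {a..u} (\<lambda>r. fts r s0)) has_vector_derivative fts t0 s0) (at t0 within {a..b})"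
    using t0ab by (intro integral_has_vector_derivative c1) auto
  then have "((\<lambda>u. integral {a..u} (\<lambda>r. fts r s0)) has_vector_derivative fts t0 s0) (at t0)"
    using t0ab at_within_Icc_at[of a t0 b] by simp
  then have "((\<lambda>u. fs a s0 + integral {a..u} (\<lambda>r. fts r s0)) has_vector_derivative fts t0 s0) (at t0)"
    by (rule has_vector_derivative_add[OF has_vector_derivative_const, simplified])
  moreover have "fs a s0 + integral {a..y} (\<lambda>r. fts r s0) = fs y s0" if "y \<in> {a<..<b}" for y
  proof -
    have "y \<in> {a..b}" using that by auto
    from key[OF this] show ?thesis by metis
  qed
  ultimately have "((\<lambda>u. fs u s0) has_vector_derivative fts t0 s0) (at t0)"
    by (rule has_vector_derivative_transform_within_open[OF _ open_greaterThanLessThan t0ab])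
  then show ?thesis using fst[OF t0 s0] vector_derivative_unique_at by blast
qed


lemma ocross_add_right: "ocross z (x + y) = ocross z x + ocross z y"
  by (metis ocross_anti ocross_add_left minus_add_distrib)
lemma ocross_scale_right: "ocross z (r *\<^sub>R x) = r *\<^sub>R ocross z x"
  by (metis ocross_anti ocross_scale_left scaleR_minus_right)

lemma bb_ocross: "bounded_bilinear ocross"
proof -
  have "bilinear ocross"
    by (simp add: bilinear_def linear_iff ocross_add_left ocross_add_right ocross_scale_left ocross_scale_right)
  then show ?thesis by (simp add: bilinear_conv_bounded_bilinear)
qed

interpretation oc: bounded_bilinear ocross by (rule bb_ocross)

lemma ocross_self: "ocross x x = 0"
  by (simp add: ocross_def)

lemma inner_ocross_left: "x \<in> ImO \<Longrightarrow> y \<in> ImO \<Longrightarrow> inner (ocross x y) x = 0"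
  using G1[of x y x] ocross_anti[of y x] ocross_Im by (simp add: inner_commute)
lemma inner_ocross_right: "x \<in> ImO \<Longrightarrow> y \<in> ImO \<Longrightarrow> inner (ocross x y) y = 0"
  using G1[of x y y] by (simp add: ocross_self)

lemma ImO_add: "x \<in> ImO \<Longrightarrow> y \<in> ImO \<Longrightarrow> x + y \<in> ImO"
  by (simp add: ImO_def ore_def)
lemma ImO_diff: "x \<in> ImO \<Longrightarrow> y \<in> ImO \<Longrightarrow> x - y \<in> ImO"
  by (simp add: ImO_def ore_def)
lemma ImO_scale: "x \<in> ImO \<Longrightarrow> r *\<^sub>R x \<in> ImO"
  by (simp add: ImO_def ore_def)
lemma ImO_minus: "x \<in> ImO \<Longrightarrow> - x \<in> ImO"
  by (simp add: ImO_def ore_def)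

locale frame =
  fixes a b c :: oct
  assumes Ia: "a \<in> ImO" and Ib: "b \<in> ImO" and Ic: "c \<in> ImO"
    and na: "inner a a = 1" and nb: "inner b b = 1" and nc: "inner c c = 1"
    and ab: "inner a b = 0" and ac: "inner a c = 0" and bc: "inner b c = 0"
    and b5: "inner b (ocross a c) = 0"
begin

lemma I3: "ocross a b \<in> ImO" and I5: "ocross a c \<in> ImO" and I6: "ocross b c \<in> ImO"
  and I7: "ocross (ocross a b) c \<in> ImO"
  by (simp_all add: ocross_Im)

lemma ba: "inner b a = 0" and ca: "inner c a = 0" and cb: "inner c b = 0"
  using ab ac bc by (simp_all add: inner_commute)

lemma prods:
  "ocross c a = - ocross a c"
  "ocross c b = - ocross b c"
  "ocross b a = - ocross a b"
  "ocross c (ocross a c) = a"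
  "ocross a (ocross a c) = - c"
  "ocross a (ocross b c) = - ocross (ocross a b) c"
  "ocross b (ocross b c) = - c"
  "ocross (ocross a c) c = - a"
  "ocross (ocross b c) c = - b"
  "ocross a (ocross a b) = - b"
  "ocross b (ocross a c) = ocross (ocross a b) c"
proof -
  show "ocross c a = - ocross a c" "ocross c b = - ocross b c" "ocross b a = - ocross a b"
    by (rule ocross_anti)+
  show p4: "ocross c (ocross a c) = a"
    using G2[OF Ic Ia] ocross_anti[of a c] nc ca ac by (simp add: oc.minus_right)
  show "ocross a (ocross a c) = - c"
    using G2[OF Ia Ic] na ca ac by simp
  show "ocross a (ocross b c) = - ocross (ocross a b) c"
    using G3[OF Ia Ib Ic] ab ac bc by (simp add: eq_neg_iff_add_eq_0)
  show "ocross b (ocross b c) = - c"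
    using G2[OF Ib Ic] nb cb bc by simp
  show "ocross (ocross a c) c = - a"
    using p4 ocross_anti[of "ocross a c" c] by simp
  show "ocross (ocross b c) c = - b"
    using G2[OF Ic Ib] ocross_anti[of b c] ocross_anti[of "ocross b c" c] nc cb bc by (simp add: oc.minus_right)
  show "ocross a (ocross a b) = - b"
    using G2[OF Ia Ib] na ba ab by simp
  show "ocross b (ocross a c) = ocross (ocross a b) c"
    using G3[OF Ib Ia Ic] ocross_anti[of b a] ab ac bc
    by (simp add: oc.minus_left inner_commute eq_neg_iff_add_eq_0 algebra_simps)
qed

lemma inners:
  "inner a (ocross a b) = 0" "inner b (ocross a b) = 0" "inner c (ocross a b) = 0"
  "inner a (ocross a c) = 0" "inner c (ocross a c) = 0" 
  "inner a (ocross b c) = 0" "inner b (ocross b c) = 0" "inner c (ocross b c) = 0"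
  "inner a (ocross (ocross a b) c) = 0" "inner b (ocross (ocross a b) c) = 0"
  "inner c (ocross (ocross a b) c) = 0"
  "inner (ocross a c) (ocross a b) = 0" "inner (ocross b c) (ocross a b) = 0"
  "inner (ocross (ocross a b) c) (ocross a b) = 0"
  "inner (ocross a c) (ocross b c) = 0"
  "inner (ocross (ocross a b) c) (ocross a c) = 0"
  "inner (ocross (ocross a b) c) (ocross b c) = 0"
  "inner (ocross a b) (ocross a b) = 1" "inner (ocross a c) (ocross a c) = 1"
  "inner (ocross b c) (ocross b c) = 1" "inner (ocross (ocross a b) c) (ocross (ocross a b) c) = 1"
proof -
  note G = inner_ocross_left inner_ocross_right
  show 1: "inner a (ocross a b) = 0" "inner b (ocross a b) = 0"
    using G[OF Ia Ib] by (simp_all add: inner_commute)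
  show 2: "inner c (ocross a b) = 0"
    using G1[OF Ic Ia Ib] ocross_anti[of c a] b5 by (simp add: inner_commute)
  show 3: "inner a (ocross a c) = 0" "inner c (ocross a c) = 0"
    using G[OF Ia Ic] by (simp_all add: inner_commute)
  show 4: "inner b (ocross b c) = 0" "inner c (ocross b c) = 0"
    using G[OF Ib Ic] by (simp_all add: inner_commute)
  show 5: "inner a (ocross b c) = 0"
    using G1[OF Ia Ib Ic] ocross_anti[of a b] b5 G1[OF Ib Ia Ic]
    by (simp add: inner_commute)
  show 6: "inner (ocross a b) (ocross a b) = 1" 
    using G4[OF Ia Ib Ib] na nb ab by simp
  show 7: "inner (ocross a c) (ocross a c) = 1" "inner (ocross a c) (ocross a b) = 0"
    using G4[OF Ia Ic Ic] G4[OF Ia Ic Ib] na nc ac ab bc by (simp_all add: inner_commute)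
  show 8: "inner (ocross b c) (ocross b c) = 1" "inner (ocross b c) (ocross a b) = 0"
    using G4[OF Ib Ic Ic] G4[OF Ib Ic Ia] nb nc bc ab ac ocross_anti[of b a]
    by (simp_all add: inner_commute)
  show 9: "inner (ocross a c) (ocross b c) = 0"
    using G4[OF Ic Ia Ib] ocross_anti[of c a] ocross_anti[of c b] nc ab ac bc
    by (simp add: inner_commute)
  have I3c: "ocross (ocross a b) c = - ocross c (ocross a b)" by (rule ocross_anti)
  have G4c: "inner (ocross c (ocross a b)) (ocross c z) = inner (ocross a b) z - inner c (ocross a b) * inner c z"
    if "z \<in> ImO" for z using G4[OF Ic I3 that] nc by simp
  have J: "inner (ocross (ocross a b) c) (ocross z c) = inner (ocross a b) z - inner c (ocross a b) * inner c z"
    if "z \<in> ImO" for z using G4c[OF that] I3c ocross_anti[of z c] by simp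
  show "inner (ocross (ocross a b) c) (ocross (ocross a b) c) = 1" 
    using J[OF I3] 2 6 by simp
  show "inner (ocross (ocross a b) c) (ocross a c) = 0"
    using J[OF Ia] 1 2 by (simp add: inner_commute)
  show "inner (ocross (ocross a b) c) (ocross b c) = 0"
    using J[OF Ib] 1 2 by (simp add: inner_commute)
  show "inner (ocross (ocross a b) c) (ocross a b) = 0"
    using G[OF I3 Ic] by (simp add: inner_commute)
  show "inner c (ocross (ocross a b) c) = 0"
    using G[OF I3 Ic] by (simp add: inner_commute)
  show "inner a (ocross (ocross a b) c) = 0"
    using G1[OF I3 Ic Ia] ocross_anti[of c a] 7 by (simp add: inner_commute)
  show "inner b (ocross (ocross a b) c) = 0"
    using G1[OF I3 Ic Ib] ocross_anti[of c b] 8 by (simp add: inner_commute)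
qed

end


lemma deriv_eq_on:
  assumes "open S" "s \<in> S" "\<And>\<sigma>. \<sigma> \<in> S \<Longrightarrow> f \<sigma> = h \<sigma>"
    "(f has_vector_derivative f') (at s)" "(h has_vector_derivative h') (at s)"
  shows "f' = h'"
proof -
  have "(h has_vector_derivative f') (at s)"
    by (rule has_vector_derivative_transform_within_open[OF assms(4) assms(1,2)]) (simp add: assms(3))
  then show ?thesis using assms(5) vector_derivative_unique_at by blast
qed

lemma deriv_const_on:
  assumes "open S" "s \<in> S" "\<And>\<sigma>. \<sigma> \<in> S \<Longrightarrow> f \<sigma> = k" "(f has_vector_derivative f') (at s)"
  shows "f' = 0"
  using deriv_eq_on[OF assms(1,2), of f "\<lambda>_. k", OF assms(3,4)] by simp

lemma deriv_Im:
  assumes "open S" "s \<in> S" "\<And>\<sigma>. \<sigma> \<in> S \<Longrightarrow> f \<sigma> \<in> ImO" "(f has_vector_derivative f') (at s)"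
  shows "f' \<in> ImO"
proof -
  have bl: "bounded_linear (\<lambda>x::oct. fst (fst x))"
    using bounded_linear_compose[OF bounded_linear_fst bounded_linear_fst] by (simp add: o_def)
  have h: "((\<lambda>\<sigma>. fst (fst (f \<sigma>))) has_vector_derivative fst (fst f')) (at s)"
    by (rule bounded_linear.has_vector_derivative[OF bl assms(4)])
  have z: "\<And>\<sigma>. \<sigma> \<in> S \<Longrightarrow> fst (fst (f \<sigma>)) = 0" using assms(3) by (simp add: ImO_def ore_def)
  have "fst (fst f') = 0" by (rule deriv_const_on[OF assms(1,2) z h])
  then show ?thesis by (simp add: ImO_def ore_def)
qed

lemma vd_transform:
  assumes "open S" "s \<in> S" "\<And>\<sigma>. \<sigma> \<in> S \<Longrightarrow> f \<sigma> = h \<sigma>" "h differentiable (at s)"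
  shows "(f has_vector_derivative vector_derivative f (at s)) (at s)"
proof -
  have "(h has_vector_derivative vector_derivative h (at s)) (at s)"
    using assms(4) vector_derivative_works by blast
  then have "(f has_vector_derivative vector_derivative h (at s)) (at s)"
    by (rule has_vector_derivative_transform_within_open[OF _ assms(1,2)]) (simp add: assms(3))
  then show ?thesis by (simp add: vector_derivative_at)
qed

lemma bb_differentiable:
  assumes "bounded_bilinear h" "f differentiable (at x)" "g differentiable (at x)"
  shows "(\<lambda>x. h (f x) (g x)) differentiable (at x)"
  using assms by (auto simp: differentiable_def intro: bounded_bilinear.FDERIV)

lemma sqrt_differentiable:
  fixes f :: "real \<Rightarrow> real"
  assumes "f differentiable (at x)" "f x > 0"
  shows "(\<lambda>x. sqrt (f x)) differentiable (at x)"
proof -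
  have "(sqrt has_derivative (*) (inverse (sqrt (f x)) / 2)) (at (f x))"
    using DERIV_real_sqrt[OF assms(2)] by (simp add: has_field_derivative_def)
  then have "sqrt differentiable (at (f x))" by (rule differentiableI)
  then show ?thesis by (rule differentiable_compose[OF _ assms(1)])
qed

lemma norm_differentiable:
  fixes f :: "real \<Rightarrow> 'a::real_inner"
  assumes "f differentiable (at x)" "f x \<noteq> 0"
  shows "(\<lambda>x. norm (f x)) differentiable (at x)"
  using differentiable_compose[OF differentiable_norm_at[OF assms(2)] assms(1)] .

lemma has_vd_norm:
  fixes f :: "real \<Rightarrow> 'a::real_inner"
  assumes f: "(f has_vector_derivative f') (at x)" and nz: "f x \<noteq> 0"
  shows "((\<lambda>x. norm (f x)) has_real_derivative inner (f x) f' / norm (f x)) (at x)"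
proof -
  have d: "((\<lambda>x. norm (f x)) has_derivative (\<lambda>h. inner (h *\<^sub>R f') (sgn (f x)))) (at x)"
    using has_derivative_compose[OF f[unfolded has_vector_derivative_def] has_derivative_norm[OF nz]] .
  have e: "(\<lambda>h. inner (h *\<^sub>R f') (sgn (f x))) = (*) (inner (f x) f' / norm (f x))"
    by (rule ext) (simp add: sgn_div_norm inner_commute divide_inverse ac_simps)
  show ?thesis unfolding has_field_derivative_def by (rule has_derivative_eq_rhs[OF d e])
qed

lemma has_vd_normalize:
  fixes f :: "real \<Rightarrow> 'a::real_inner"
  assumes f: "(f has_vector_derivative f') (at x)" and nz: "f x \<noteq> 0"
  shows "((\<lambda>x. (1 / norm (f x)) *\<^sub>R f x) has_vector_derivative
     ((1 / norm (f x)) *\<^sub>R f' - (inner (f x) f' / norm (f x) ^ 3) *\<^sub>R f x)) (at x)"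
proof -
  have n: "((\<lambda>x. norm (f x)) has_real_derivative inner (f x) f' / norm (f x)) (at x)"
    by (rule has_vd_norm[OF f nz])
  have nz': "norm (f x) \<noteq> 0" using nz by simp
  have i: "((\<lambda>x. 1 / norm (f x)) has_real_derivative
      - (inner (f x) f' / norm (f x) ^ 3)) (at x)"
    apply (rule DERIV_cong[OF DERIV_divide[OF DERIV_const n nz']])
    using nz' by (simp add: power3_eq_cube)
  have h1: "((\<lambda>x. (1 / norm (f x)) *\<^sub>R f x) has_vector_derivative
     ((1 / norm (f x)) *\<^sub>R f' + (- (inner (f x) f' / norm (f x) ^ 3)) *\<^sub>R f x)) (at x)"
    by (rule has_vector_derivative_scaleR[OF i f])
  show ?thesis
    by (rule has_vector_derivative_eq_rhs[OF h1]) (metis diff_conv_add_uminus scaleR_minus_left)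
qed


context frame begin

lemmas inners_sym = inners[THEN trans[OF inner_commute]]

lemma prods2:
  "ocross (ocross a c) b = - ocross (ocross a b) c"
  "ocross c (ocross b c) = b"
  using prods(11) ocross_anti[of "ocross a c" b] apply simp
  using prods(9) ocross_anti[of c "ocross b c"] by simp

lemma crossQ: "Q \<in> ImO \<Longrightarrow> ocross (ocross c Q) c = Q - inner Q c *\<^sub>R c"
  using G2[OF Ic, of Q] ocross_anti[of "ocross c Q" c] nc by simp

lemma innerQ: "Q \<in> ImO \<Longrightarrow> inner (ocross a Q) (ocross b c) = inner Q (ocross (ocross a b) c)"
proof -
  assume IQ: "Q \<in> ImO"
  have "inner (ocross a Q) (ocross b c) = - inner (ocross Q a) (ocross b c)"
    using ocross_anti[of a Q] by simp
  also have "\<dots> = - inner Q (ocross a (ocross b c))" using G1[OF IQ Ia I6] by simp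
  also have "\<dots> = inner Q (ocross (ocross a b) c)" using prods(6) by simp
  finally show ?thesis .
qed

lemmas fsimps = oc.add_left oc.add_right oc.diff_left oc.diff_right oc.scaleR_left oc.scaleR_right
  oc.minus_left oc.minus_right oc.zero_left oc.zero_right ocross_self
  inner_add_left inner_add_right inner_diff_left inner_diff_right inner_scaleR_left inner_scaleR_right
  inner_minus_left inner_minus_right prods prods2 inners inners_sym na nb nc ab ac bc ba ca cb b5
  b5[THEN trans[OF inner_commute]]

lemma final_alg:
  fixes Q P B C D P2 ptc ptB ptI1 ptI5 I5d :: oct and n \<kappa> \<rho> e e' \<kappa>' p4' \<rho>' \<mu> :: real
  assumes IQ: "Q \<in> ImO" and n: "n > 0"
  and Qb: "inner Q b = 0" and al: "inner Q (ocross a b) = 0"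
  and be: "inner Q (ocross (ocross a b) c) + inner (ocross a Q + ocross P b) (ocross b c) = 0"
  and P: "P = \<kappa> *\<^sub>R b + (-n) *\<^sub>R c + \<rho> *\<^sub>R ocross a c"
  and B: "B = n *\<^sub>R a"
  and C: "C = e *\<^sub>R a + n *\<^sub>R P"
  and I5d: "I5d = ocross a B + ocross P c"
  and P2: "P2 = (\<kappa> *\<^sub>R Q + \<kappa>' *\<^sub>R b) + ((-n) *\<^sub>R B + p4' *\<^sub>R c) + (\<rho> *\<^sub>R I5d + \<rho>' *\<^sub>R ocross a c)"
  and D: "D = e *\<^sub>R P + e' *\<^sub>R a + (n *\<^sub>R P2 + e *\<^sub>R P)"
  and ptc: "ptc = ocross c C"
  and ptB: "ptB = ocross c D + ocross B C"
  and ptI1: "ptI1 = (1/n) *\<^sub>R ptB - \<mu> *\<^sub>R B"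
  and ptI5: "ptI5 = ocross a ptc + ocross ptI1 c"
  shows "inner ptI5 (ocross a b) = 0" "inner ptI5 (ocross (ocross a b) c) = 3/2 * n * \<kappa>"
   "inner ptc (ocross a b) = 0" "inner ptc b = 0" "inner ptc (ocross (ocross a b) c) = 0"
   "inner I5d (ocross a b) = 0" "inner I5d b = 0" "inner I5d (ocross (ocross a b) c) = 0"
   "inner B (ocross a b) = 0" "inner B b = 0" "inner B (ocross (ocross a b) c) = 0"
proof -
  have b1: "inner Q (ocross (ocross a b) c) = - n / 2"
  proof -
    have "inner (ocross P b) (ocross b c) = n"
      unfolding P by (simp add: fsimps)
    then show ?thesis using be innerQ[OF IQ] by (simp add: inner_add_left)
  qed
  note QQ = crossQ[OF IQ] b1 al Qb
  show "inner ptI5 (ocross a b) = 0" 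
    unfolding ptI5 ptI1 ptB ptc D P2 I5d C B P using n by (simp add: fsimps QQ)
  show "inner ptI5 (ocross (ocross a b) c) = 3/2 * n * \<kappa>"
    unfolding ptI5 ptI1 ptB ptc D P2 I5d C B P using n by (simp add: fsimps QQ field_simps)
  show "inner ptc (ocross a b) = 0" "inner ptc b = 0" "inner ptc (ocross (ocross a b) c) = 0"
    unfolding ptc C P by (simp_all add: fsimps)
  show "inner I5d (ocross a b) = 0" "inner I5d b = 0" "inner I5d (ocross (ocross a b) c) = 0"
    unfolding I5d B P by (simp_all add: fsimps)
  show "inner B (ocross a b) = 0" "inner B b = 0" "inner B (ocross (ocross a b) c) = 0"
    unfolding B by (simp_all add: fsimps)
qed

end


lemma I4_eq: "I4 g = ps g" by (simp add: I4_def fun_eq_iff)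
lemma k1_eq: "k1 g \<tau> \<sigma> = norm (ps (ps g) \<tau> \<sigma>)" by (simp add: k1_def onorm_eq)
lemma I1_eq: "I1 g \<tau> \<sigma> = (1 / norm (ps (ps g) \<tau> \<sigma>)) *\<^sub>R ps (ps g) \<tau> \<sigma>"
  by (simp add: I1_def k1_eq I4_eq)
lemma I5_eq: "I5 g \<tau> \<sigma> = ocross (I1 g \<tau> \<sigma>) (ps g \<tau> \<sigma>)"
  by (simp add: I5_def I4_eq)
lemma kappa2_eq: "kappa2 g \<tau> \<sigma> = sqrt (inner (ps (I1 g) \<tau> \<sigma>) (ps (I1 g) \<tau> \<sigma>)
   - (inner (ps (I1 g) \<tau> \<sigma>) (ps g \<tau> \<sigma>))\<^sup>2 - (inner (ps (I1 g) \<tau> \<sigma>) (I5 g \<tau> \<sigma>))\<^sup>2)"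
  by (simp add: kappa2_def onorm_eq oinner_eq I4_eq power2_norm_eq_inner)
lemma I2_eq: "I2 g \<tau> \<sigma> = (1 / kappa2 g \<tau> \<sigma>) *\<^sub>R (ps (I1 g) \<tau> \<sigma>
   - inner (ps (I1 g) \<tau> \<sigma>) (ps g \<tau> \<sigma>) *\<^sub>R ps g \<tau> \<sigma> - inner (ps (I1 g) \<tau> \<sigma>) (I5 g \<tau> \<sigma>) *\<^sub>R I5 g \<tau> \<sigma>)"
  by (simp add: I2_def oinner_eq I4_eq)

lemma inner_vd:
  "(f has_vector_derivative f') (at x) \<Longrightarrow> (h has_vector_derivative h') (at x) \<Longrightarrow>
   ((\<lambda>x. inner (f x) (h x)) has_vector_derivative (inner (f x) h' + inner f' (h x))) (at x)"
  by (rule bounded_bilinear.has_vector_derivative[OF bounded_bilinear_inner])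

lemma ocross_vd:
  "(f has_vector_derivative f') (at x) \<Longrightarrow> (h has_vector_derivative h') (at x) \<Longrightarrow>
   ((\<lambda>x. ocross (f x) (h x)) has_vector_derivative (ocross (f x) h' + ocross f' (h x))) (at x)"
  by (rule oc.has_vector_derivative)

lemma scaleR_vd:
  "((f::real\<Rightarrow>real) has_vector_derivative f') (at x) \<Longrightarrow> (h has_vector_derivative h') (at x) \<Longrightarrow>
   ((\<lambda>x. f x *\<^sub>R h x) has_vector_derivative (f x *\<^sub>R h' + f' *\<^sub>R h x)) (at x)"
  by (rule has_vector_derivative_scaleR) (simp add: has_real_derivative_iff_has_vector_derivative)

lemma vd_diff: "f differentiable (at x) \<Longrightarrow> (f has_vector_derivative vector_derivative f (at x)) (at x)"
  using vector_derivative_works by blast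

locale fixt =
  fixes g :: "real \<Rightarrow> real \<Rightarrow> oct" and T S :: "real set" and t :: real
  assumes T: "open T" and S: "open S" "is_interval S"
    and smooth: "smooth2_on (T \<times> S) g"
    and im: "\<forall>t\<in>T. \<forall>s\<in>S. g t s \<in> ImO"
    and eq: "\<forall>t\<in>T. \<forall>s\<in>S. pt g t s = ocross (ps g t s) (ps (ps g) t s)"
    and unit: "\<forall>t\<in>T. \<forall>s\<in>S. onorm (ps g t s) = 1"
    and k1pos: "\<forall>t\<in>T. \<forall>s\<in>S. k1 g t s > 0"
    and k2pos: "\<forall>t\<in>T. \<forall>s\<in>S. kappa2 g t s > 0"
    and tT: "t \<in> T"
begin

lemma sm: "continuous_on (T \<times> S) (\<lambda>(t,s). pd ws g t s)"
   "\<forall>(t,s)\<in>T \<times> S. ((\<lambda>\<sigma>. pd ws g t \<sigma>) has_vector_derivative ps (pd ws g) t s) (at s) \<and>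
          ((\<lambda>\<tau>. pd ws g \<tau> s) has_vector_derivative pt (pd ws g) t s) (at t)"
  using smooth[unfolded smooth2_on_def, THEN spec[of _ ws]] by auto

lemma dS': "\<tau> \<in> T \<Longrightarrow> \<sigma> \<in> S \<Longrightarrow> ((\<lambda>\<sigma>. pd ws g \<tau> \<sigma>) has_vector_derivative pd (True#ws) g \<tau> \<sigma>) (at \<sigma>)"
  using sm(2)[of ws] by auto
lemma dT: "\<tau> \<in> T \<Longrightarrow> \<sigma> \<in> S \<Longrightarrow> ((\<lambda>\<tau>. pd ws g \<tau> \<sigma>) has_vector_derivative pd (False#ws) g \<tau> \<sigma>) (at \<tau>)"
  using sm(2)[of ws] by auto
lemma dS: "\<sigma> \<in> S \<Longrightarrow> ((\<lambda>\<sigma>. pd ws g t \<sigma>) has_vector_derivative pd (True#ws) g t \<sigma>) (at \<sigma>)"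
  using dS'[OF tT] .

lemma sw: "\<tau> \<in> T \<Longrightarrow> \<sigma> \<in> S \<Longrightarrow> pd (False#True#ws) g \<tau> \<sigma> = pd (True#False#ws) g \<tau> \<sigma>"
  apply (rule schwarz[where f="pd ws g" and ft="pd (False#ws) g" and fs="pd (True#ws) g", OF T S])
  using dT[of _ _ ws] dT[of _ _ "True#ws"] dS'[of _ _ ws] dS'[of _ _ "False#ws"] sm(1)[of "True#False#ws"]
  by auto

end


context fixt begin

lemma hg: "\<sigma> \<in> S \<Longrightarrow> ((\<lambda>\<sigma>. g t \<sigma>) has_vector_derivative ps g t \<sigma>) (at \<sigma>)"
  using dS[of \<sigma> "[]"] by simp
lemma hc: "\<sigma> \<in> S \<Longrightarrow> ((\<lambda>\<sigma>. ps g t \<sigma>) has_vector_derivative ps (ps g) t \<sigma>) (at \<sigma>)"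
  using dS[of \<sigma> "[True]"] by simp
lemma hB: "\<sigma> \<in> S \<Longrightarrow> ((\<lambda>\<sigma>. ps (ps g) t \<sigma>) has_vector_derivative ps (ps (ps g)) t \<sigma>) (at \<sigma>)"
  using dS[of \<sigma> "[True,True]"] by simp
lemma hC: "\<sigma> \<in> S \<Longrightarrow> ((\<lambda>\<sigma>. ps (ps (ps g)) t \<sigma>) has_vector_derivative ps (ps (ps (ps g))) t \<sigma>) (at \<sigma>)"
  using dS[of \<sigma> "[True,True,True]"] by simp

lemma Ig: "\<sigma> \<in> S \<Longrightarrow> g t \<sigma> \<in> ImO" using im tT by auto
lemma Ic: "\<sigma> \<in> S \<Longrightarrow> ps g t \<sigma> \<in> ImO"
  by (rule deriv_Im[OF S(1) _ Ig hg])
lemma IB: "\<sigma> \<in> S \<Longrightarrow> ps (ps g) t \<sigma> \<in> ImO"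
  by (rule deriv_Im[OF S(1) _ Ic hc])

lemma nc: "\<sigma> \<in> S \<Longrightarrow> inner (ps g t \<sigma>) (ps g t \<sigma>) = 1"
proof -
  assume s: "\<sigma> \<in> S"
  have "norm (ps g t \<sigma>) = 1" using unit tT s by (simp add: onorm_eq)
  then show ?thesis by (simp add: power2_norm_eq_inner[symmetric])
qed

lemma cB: "\<sigma> \<in> S \<Longrightarrow> inner (ps g t \<sigma>) (ps (ps g) t \<sigma>) = 0"
proof -
  assume s: "\<sigma> \<in> S"
  have "inner (ps g t \<sigma>) (ps (ps g) t \<sigma>) + inner (ps (ps g) t \<sigma>) (ps g t \<sigma>) = 0"
    by (rule deriv_const_on[OF S(1) s nc inner_vd[OF hc[OF s] hc[OF s]]])
  then show ?thesis by (simp add: inner_commute)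
qed

lemma Bnz: "\<sigma> \<in> S \<Longrightarrow> norm (ps (ps g) t \<sigma>) > 0"
  using k1pos tT by (simp add: k1_eq)

lemma Bnz0: "\<sigma> \<in> S \<Longrightarrow> ps (ps g) t \<sigma> \<noteq> 0"
  using Bnz[of \<sigma>] by auto

lemma ha: "\<sigma> \<in> S \<Longrightarrow> ((\<lambda>\<sigma>. I1 g t \<sigma>) has_vector_derivative
   ((1 / norm (ps (ps g) t \<sigma>)) *\<^sub>R ps (ps (ps g)) t \<sigma> -
    (inner (ps (ps g) t \<sigma>) (ps (ps (ps g)) t \<sigma>) / norm (ps (ps g) t \<sigma>) ^ 3) *\<^sub>R ps (ps g) t \<sigma>)) (at \<sigma>)"
proof -
  assume s: "\<sigma> \<in> S"
  show ?thesis unfolding I1_eq by (rule has_vd_normalize[OF hB[OF s]]) (use Bnz[OF s] in simp)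
qed

lemma Peq: "\<sigma> \<in> S \<Longrightarrow> ps (I1 g) t \<sigma> =
   (1 / norm (ps (ps g) t \<sigma>)) *\<^sub>R ps (ps (ps g)) t \<sigma> -
    (inner (ps (ps g) t \<sigma>) (ps (ps (ps g)) t \<sigma>) / norm (ps (ps g) t \<sigma>) ^ 3) *\<^sub>R ps (ps g) t \<sigma>"
  unfolding ps_def[of "I1 g"] by (rule vector_derivative_at[OF ha])

lemma ha2: "\<sigma> \<in> S \<Longrightarrow> ((\<lambda>\<sigma>. I1 g t \<sigma>) has_vector_derivative ps (I1 g) t \<sigma>) (at \<sigma>)"
  by (subst Peq) (auto intro: ha)

lemma dB: "\<sigma> \<in> S \<Longrightarrow> (\<lambda>\<sigma>. ps (ps g) t \<sigma>) differentiable (at \<sigma>)"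
  by (rule differentiableI_vector[OF hB])
lemma dC: "\<sigma> \<in> S \<Longrightarrow> (\<lambda>\<sigma>. ps (ps (ps g)) t \<sigma>) differentiable (at \<sigma>)"
  by (rule differentiableI_vector[OF hC])
lemma dc: "\<sigma> \<in> S \<Longrightarrow> (\<lambda>\<sigma>. ps g t \<sigma>) differentiable (at \<sigma>)"
  by (rule differentiableI_vector[OF hc])
lemma dnB: "\<sigma> \<in> S \<Longrightarrow> (\<lambda>\<sigma>. norm (ps (ps g) t \<sigma>)) differentiable (at \<sigma>)"
  by (rule norm_differentiable[OF dB Bnz0])

lemma hP: "\<sigma> \<in> S \<Longrightarrow> ((\<lambda>\<sigma>. ps (I1 g) t \<sigma>) has_vector_derivative ps (ps (I1 g)) t \<sigma>) (at \<sigma>)"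
proof -
  assume s: "\<sigma> \<in> S"
  have nz: "norm (ps (ps g) t \<sigma>) \<noteq> 0" using Bnz[OF s] by simp
  have nz3: "norm (ps (ps g) t \<sigma>) ^ 3 \<noteq> 0" using Bnz[OF s] by simp
  have dh: "(\<lambda>\<sigma>. (1 / norm (ps (ps g) t \<sigma>)) *\<^sub>R ps (ps (ps g)) t \<sigma> -
    (inner (ps (ps g) t \<sigma>) (ps (ps (ps g)) t \<sigma>) / norm (ps (ps g) t \<sigma>) ^ 3) *\<^sub>R ps (ps g) t \<sigma>)
     differentiable (at \<sigma>)"
    apply (rule differentiable_diff)
     apply (rule differentiable_scaleR)
      apply (rule differentiable_divide[OF differentiable_const dnB[OF s] nz])
     apply (rule dC[OF s])
    apply (rule differentiable_scaleR)
     apply (rule differentiable_divide)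
       apply (rule bb_differentiable[OF bounded_bilinear_inner dB[OF s] dC[OF s]])
      apply (rule differentiable_power[OF dnB[OF s]])
     apply (rule nz3)
    apply (rule dB[OF s])
    done
  show ?thesis
    unfolding ps_def[of "ps (I1 g)"] by (rule vd_transform[OF S(1) s _ dh]) (simp add: Peq)
qed

lemma Ia: "\<sigma> \<in> S \<Longrightarrow> I1 g t \<sigma> \<in> ImO"
  unfolding I1_eq by (rule ImO_scale[OF IB])

lemma nB: "inner (ps (ps g) t \<sigma>) (ps (ps g) t \<sigma>) = (norm (ps (ps g) t \<sigma>))\<^sup>2"
  by (simp add: power2_norm_eq_inner)

lemma na: "\<sigma> \<in> S \<Longrightarrow> inner (I1 g t \<sigma>) (I1 g t \<sigma>) = 1"
  using Bnz[of \<sigma>] by (simp add: I1_eq nB power2_eq_square)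

lemma Bna: "\<sigma> \<in> S \<Longrightarrow> ps (ps g) t \<sigma> = norm (ps (ps g) t \<sigma>) *\<^sub>R I1 g t \<sigma>"
  using Bnz[of \<sigma>] by (simp add: I1_eq)

lemma ac: "\<sigma> \<in> S \<Longrightarrow> inner (I1 g t \<sigma>) (ps g t \<sigma>) = 0"
  using cB[of \<sigma>] by (simp add: I1_eq inner_commute)

lemma IP: "\<sigma> \<in> S \<Longrightarrow> ps (I1 g) t \<sigma> \<in> ImO"
  by (rule deriv_Im[OF S(1) _ Ia ha2])

lemma Pa: "\<sigma> \<in> S \<Longrightarrow> inner (ps (I1 g) t \<sigma>) (I1 g t \<sigma>) = 0"
proof -
  assume s: "\<sigma> \<in> S"
  have "inner (I1 g t \<sigma>) (ps (I1 g) t \<sigma>) + inner (ps (I1 g) t \<sigma>) (I1 g t \<sigma>) = 0"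
    by (rule deriv_const_on[OF S(1) s na inner_vd[OF ha2[OF s] ha2[OF s]]])
  then show ?thesis by (simp add: inner_commute)
qed

lemma Pc: "\<sigma> \<in> S \<Longrightarrow> inner (ps (I1 g) t \<sigma>) (ps g t \<sigma>) = - norm (ps (ps g) t \<sigma>)"
proof -
  assume s: "\<sigma> \<in> S"
  have "inner (I1 g t \<sigma>) (ps (ps g) t \<sigma>) + inner (ps (I1 g) t \<sigma>) (ps g t \<sigma>) = 0"
    by (rule deriv_const_on[OF S(1) s ac inner_vd[OF ha2[OF s] hc[OF s]]])
  moreover have "inner (I1 g t \<sigma>) (ps (ps g) t \<sigma>) = norm (ps (ps g) t \<sigma>)"
    using Bnz[OF s] by (simp add: I1_eq nB power2_eq_square)
  ultimately show ?thesis by linarith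
qed

lemma hI5: "\<sigma> \<in> S \<Longrightarrow> ((\<lambda>\<sigma>. I5 g t \<sigma>) has_vector_derivative
   ocross (I1 g t \<sigma>) (ps (ps g) t \<sigma>) + ocross (ps (I1 g) t \<sigma>) (ps g t \<sigma>)) (at \<sigma>)"
  unfolding I5_eq by (rule ocross_vd[OF ha2 hc])

end


context fixt begin

lemma Kpos: "\<sigma> \<in> S \<Longrightarrow> kappa2 g t \<sigma> > 0" using k2pos tT by auto

lemma argpos: "\<sigma> \<in> S \<Longrightarrow> inner (ps (I1 g) t \<sigma>) (ps (I1 g) t \<sigma>)
   - (inner (ps (I1 g) t \<sigma>) (ps g t \<sigma>))\<^sup>2 - (inner (ps (I1 g) t \<sigma>) (I5 g t \<sigma>))\<^sup>2 > 0"
  using Kpos[of \<sigma>] by (simp add: kappa2_eq)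

lemma Ksq: "\<sigma> \<in> S \<Longrightarrow> (kappa2 g t \<sigma>)\<^sup>2 = inner (ps (I1 g) t \<sigma>) (ps (I1 g) t \<sigma>)
   - (inner (ps (I1 g) t \<sigma>) (ps g t \<sigma>))\<^sup>2 - (inner (ps (I1 g) t \<sigma>) (I5 g t \<sigma>))\<^sup>2"
  using argpos[of \<sigma>] by (simp add: kappa2_eq)

lemma dP: "\<sigma> \<in> S \<Longrightarrow> (\<lambda>\<sigma>. ps (I1 g) t \<sigma>) differentiable (at \<sigma>)"
  by (rule differentiableI_vector[OF hP])
lemma dI5: "\<sigma> \<in> S \<Longrightarrow> (\<lambda>\<sigma>. I5 g t \<sigma>) differentiable (at \<sigma>)"
  by (rule differentiableI_vector[OF hI5])

lemmas bbi = bb_differentiable[OF bounded_bilinear_inner]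

lemma dK: "\<sigma> \<in> S \<Longrightarrow> (\<lambda>\<sigma>. kappa2 g t \<sigma>) differentiable (at \<sigma>)"
proof -
  assume s: "\<sigma> \<in> S"
  have arg: "(\<lambda>\<sigma>. inner (ps (I1 g) t \<sigma>) (ps (I1 g) t \<sigma>)
   - (inner (ps (I1 g) t \<sigma>) (ps g t \<sigma>))\<^sup>2 - (inner (ps (I1 g) t \<sigma>) (I5 g t \<sigma>))\<^sup>2) differentiable (at \<sigma>)"
    by (rule differentiable_diff[OF differentiable_diff[OF bbi[OF dP[OF s] dP[OF s]]
         differentiable_power[OF bbi[OF dP[OF s] dc[OF s]]]] differentiable_power[OF bbi[OF dP[OF s] dI5[OF s]]]])
  show ?thesis unfolding kappa2_eq by (rule sqrt_differentiable[OF arg argpos[OF s]])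
qed

lemma hK: "\<sigma> \<in> S \<Longrightarrow> ((\<lambda>\<sigma>. kappa2 g t \<sigma>) has_vector_derivative vector_derivative (\<lambda>\<sigma>. kappa2 g t \<sigma>) (at \<sigma>)) (at \<sigma>)"
  by (rule vd_diff[OF dK])

lemma hb: "\<sigma> \<in> S \<Longrightarrow> ((\<lambda>\<sigma>. I2 g t \<sigma>) has_vector_derivative ps (I2 g) t \<sigma>) (at \<sigma>)"
proof -
  assume s: "\<sigma> \<in> S"
  have nz: "kappa2 g t \<sigma> \<noteq> 0" using Kpos[OF s] by simp
  have "(\<lambda>\<sigma>. I2 g t \<sigma>) differentiable (at \<sigma>)"
    unfolding I2_eq
    apply (rule differentiable_scaleR)
     apply (rule differentiable_divide[OF differentiable_const dK[OF s] nz])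
    apply (rule differentiable_diff)
     apply (rule differentiable_diff)
      apply (rule dP[OF s])
     apply (rule differentiable_scaleR[OF bbi[OF dP[OF s] dc[OF s]] dc[OF s]])
    apply (rule differentiable_scaleR[OF bbi[OF dP[OF s] dI5[OF s]] dI5[OF s]])
    done
  then show ?thesis unfolding ps_def[of "I2 g"] by (rule vd_diff)
qed

lemma frame_at: "\<sigma> \<in> S \<Longrightarrow> frame (I1 g t \<sigma>) (I2 g t \<sigma>) (ps g t \<sigma>)"
   and Pdec: "\<sigma> \<in> S \<Longrightarrow> ps (I1 g) t \<sigma> = kappa2 g t \<sigma> *\<^sub>R I2 g t \<sigma>
      + inner (ps (I1 g) t \<sigma>) (ps g t \<sigma>) *\<^sub>R ps g t \<sigma> + inner (ps (I1 g) t \<sigma>) (I5 g t \<sigma>) *\<^sub>R I5 g t \<sigma>"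
proof -
  assume s: "\<sigma> \<in> S"
  define a where "a = I1 g t \<sigma>"
  define c where "c = ps g t \<sigma>"
  define P where "P = ps (I1 g) t \<sigma>"
  define K where "K = kappa2 g t \<sigma>"
  define v where "v = I5 g t \<sigma>"
  define p where "p = inner P c"
  define r where "r = inner P v"
  define u where "u = P - p *\<^sub>R c - r *\<^sub>R v"
  have v: "v = ocross a c" by (simp add: v_def a_def c_def I5_eq)
  have Ia: "a \<in> ImO" and Ic: "c \<in> ImO" and IP: "P \<in> ImO"
    using Ia[OF s] Ic[OF s] IP[OF s] by (simp_all add: a_def c_def P_def)
  have Iv: "v \<in> ImO" by (simp add: v ocross_Im)
  have na: "inner a a = 1" and nc: "inner c c = 1" and ac: "inner a c = 0"
    using na[OF s] nc[OF s] ac[OF s] by (simp_all add: a_def c_def)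
  have Pa: "inner P a = 0" using Pa[OF s] by (simp add: P_def a_def)
  have vv: "inner v v = 1" using G4[OF Ia Ic Ic] na nc ac by (simp add: v)
  have cv: "inner c v = 0" using inner_ocross_right[OF Ia Ic] by (simp add: v inner_commute)
  have av: "inner a v = 0" using inner_ocross_left[OF Ia Ic] by (simp add: v inner_commute)
  have Kp: "K > 0" using Kpos[OF s] by (simp add: K_def)
  have K2: "K\<^sup>2 = inner u u"
    using Ksq[OF s] nc vv cv
    by (simp add: K_def u_def p_def r_def P_def c_def v_def inner_diff_left inner_diff_right
        inner_commute power2_eq_square algebra_simps)
  have ua: "inner u a = 0" using Pa ac av by (simp add: u_def inner_diff_left inner_diff_right inner_commute)
  have uc: "inner u c = 0" using nc cv by (simp add: u_def p_def inner_diff_left inner_diff_right inner_commute)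
  have uv: "inner u v = 0" using vv cv by (simp add: u_def r_def inner_diff_left inner_diff_right inner_commute)
  have b: "I2 g t \<sigma> = (1 / K) *\<^sub>R u"
    by (simp add: I2_eq K_def u_def p_def r_def P_def c_def v_def)
  have Iu: "u \<in> ImO" unfolding u_def by (intro ImO_diff ImO_scale IP Ic Iv)
  show "frame (I1 g t \<sigma>) (I2 g t \<sigma>) (ps g t \<sigma>)"
    unfolding a_def[symmetric] c_def[symmetric] b
  proof
    show "a \<in> ImO" "c \<in> ImO" "(1 / K) *\<^sub>R u \<in> ImO" using Ia Ic Iu by (simp_all add: ImO_scale)
    show "inner a a = 1" "inner c c = 1" "inner a c = 0" by (fact na nc ac)+
    show "inner ((1 / K) *\<^sub>R u) ((1 / K) *\<^sub>R u) = 1" using Kp by (simp add: K2[symmetric] power2_eq_square)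
    show "inner a ((1 / K) *\<^sub>R u) = 0" using ua by (simp add: inner_commute)
    show "inner ((1 / K) *\<^sub>R u) c = 0" using uc by simp
    show "inner ((1 / K) *\<^sub>R u) (ocross a c) = 0" using uv by (simp add: v)
  qed
  show "ps (I1 g) t \<sigma> = kappa2 g t \<sigma> *\<^sub>R I2 g t \<sigma>
      + inner (ps (I1 g) t \<sigma>) (ps g t \<sigma>) *\<^sub>R ps g t \<sigma> + inner (ps (I1 g) t \<sigma>) (I5 g t \<sigma>) *\<^sub>R I5 g t \<sigma>"
    unfolding b using Kp
    by (simp add: K_def[symmetric] P_def[symmetric] c_def[symmetric] v_def[symmetric] p_def[symmetric]
       r_def[symmetric] u_def)
qed

lemma Ib: "\<sigma> \<in> S \<Longrightarrow> I2 g t \<sigma> \<in> ImO"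
  using frame.Ib[OF frame_at] .

lemma Qb: "\<sigma> \<in> S \<Longrightarrow> inner (ps (I2 g) t \<sigma>) (I2 g t \<sigma>) = 0"
proof -
  assume s: "\<sigma> \<in> S"
  have "inner (I2 g t \<sigma>) (ps (I2 g) t \<sigma>) + inner (ps (I2 g) t \<sigma>) (I2 g t \<sigma>) = 0"
    by (rule deriv_const_on[OF S(1) s frame.nb[OF frame_at] inner_vd[OF hb[OF s] hb[OF s]]])
  then show ?thesis by (simp add: inner_commute)
qed

lemma IQ: "\<sigma> \<in> S \<Longrightarrow> ps (I2 g) t \<sigma> \<in> ImO"
  by (rule deriv_Im[OF S(1) _ Ib hb])

lemma pstg: "\<sigma> \<in> S \<Longrightarrow> ps (pt g) t \<sigma> = ocross (ps g t \<sigma>) (ps (ps (ps g)) t \<sigma>)"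
proof -
  assume s: "\<sigma> \<in> S"
  have h1: "((\<lambda>\<sigma>. pt g t \<sigma>) has_vector_derivative ps (pt g) t \<sigma>) (at \<sigma>)"
    using dS[OF s, of "[False]"] by simp
  have h2: "((\<lambda>\<sigma>. ocross (ps g t \<sigma>) (ps (ps g) t \<sigma>)) has_vector_derivative
     ocross (ps g t \<sigma>) (ps (ps (ps g)) t \<sigma>) + ocross (ps (ps g) t \<sigma>) (ps (ps g) t \<sigma>)) (at \<sigma>)"
    by (rule ocross_vd[OF hc[OF s] hB[OF s]])
  have "ps (pt g) t \<sigma> = ocross (ps g t \<sigma>) (ps (ps (ps g)) t \<sigma>) + ocross (ps (ps g) t \<sigma>) (ps (ps g) t \<sigma>)"
    by (rule deriv_eq_on[OF S(1) s _ h1 h2]) (use eq tT in auto)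
  then show ?thesis by (simp add: ocross_self)
qed

lemma ptps: "\<sigma> \<in> S \<Longrightarrow> pt (ps g) t \<sigma> = ocross (ps g t \<sigma>) (ps (ps (ps g)) t \<sigma>)"
  using sw[OF tT, of \<sigma> "[]"] pstg[of \<sigma>] by simp

lemma ptB: "s \<in> S \<Longrightarrow> pt (ps (ps g)) t s =
   ocross (ps g t s) (ps (ps (ps (ps g))) t s) + ocross (ps (ps g) t s) (ps (ps (ps g)) t s)"
proof -
  assume s: "s \<in> S"
  have e1: "pt (ps (ps g)) t s = ps (pt (ps g)) t s" using sw[OF tT s, of "[True]"] by simp
  have h1: "((\<lambda>\<sigma>. pt (ps g) t \<sigma>) has_vector_derivative ps (pt (ps g)) t s) (at s)"
    using dS[OF s, of "[False,True]"] by simp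
  have h2: "((\<lambda>\<sigma>. ocross (ps g t \<sigma>) (ps (ps (ps g)) t \<sigma>)) has_vector_derivative
     ocross (ps g t s) (ps (ps (ps (ps g))) t s) + ocross (ps (ps g) t s) (ps (ps (ps g)) t s)) (at s)"
    by (rule ocross_vd[OF hc[OF s] hC[OF s]])
  show ?thesis unfolding e1
    by (rule deriv_eq_on[OF S(1) s _ h1 h2]) (rule ptps)
qed

lemma ptI5: "s \<in> S \<Longrightarrow> ((\<lambda>\<tau>. I5 g \<tau> s) has_vector_derivative
   ocross (I1 g t s) (pt (ps g) t s) +
   ocross ((1 / norm (ps (ps g) t s)) *\<^sub>R pt (ps (ps g)) t s -
      (inner (ps (ps g) t s) (pt (ps (ps g)) t s) / norm (ps (ps g) t s) ^ 3) *\<^sub>R ps (ps g) t s) (ps g t s)) (at t)"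
proof -
  assume s: "s \<in> S"
  have hBt: "((\<lambda>\<tau>. ps (ps g) \<tau> s) has_vector_derivative pt (ps (ps g)) t s) (at t)"
    using dT[OF tT s, of "[True,True]"] by simp
  have hct: "((\<lambda>\<tau>. ps g \<tau> s) has_vector_derivative pt (ps g) t s) (at t)"
    using dT[OF tT s, of "[True]"] by simp
  show ?thesis unfolding I5_eq I1_eq
    by (rule ocross_vd[OF has_vd_normalize[OF hBt Bnz0[OF s]] hct])
qed

lemma hI3: "\<sigma> \<in> S \<Longrightarrow> ps (I3 g) t \<sigma> = ocross (I1 g t \<sigma>) (ps (I2 g) t \<sigma>) + ocross (ps (I1 g) t \<sigma>) (I2 g t \<sigma>)"
proof -
  assume s: "\<sigma> \<in> S"
  have "((\<lambda>\<sigma>. I3 g t \<sigma>) has_vector_derivative ocross (I1 g t \<sigma>) (ps (I2 g) t \<sigma>) + ocross (ps (I1 g) t \<sigma>) (I2 g t \<sigma>)) (at \<sigma>)"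
    unfolding I3_def by (rule ocross_vd[OF ha2[OF s] hb[OF s]])
  then show ?thesis unfolding ps_def[of "I3 g"] by (rule vector_derivative_at)
qed

end


lemma cmod_expi: "cmod (exp (- \<i> * complex_of_real x)) = 1"
  by (simp add: norm_exp_eq_Re)

lemma cmod_rr: "cmod (rr g t s) = 1 / sqrt 2"
  by (simp add: rr_def norm_mult norm_divide norm_exp_eq_Re)
lemma cmod_qq: "cmod (qq g t s) = 1 / sqrt 2"
  by (simp add: qq_def norm_mult norm_divide norm_exp_eq_Re)

lemma w2_eq: "w2 g t s = abs (k1 g t s)"
  by (simp add: w2_def phi1_def norm_mult cmod_rr)

lemma phi2_norm: "cmod (phi2 g t s) = abs (kappa2 g t s)"
proof -
  have "cmod (phi2 g t s) = abs (2 * kappa2 g t s) * (1 / sqrt 2) * (1 / sqrt 2)"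
    by (simp add: phi2_def norm_mult cmod_rr cmod_qq)
  also have "\<dots> = abs (kappa2 g t s)" by (simp add: abs_mult)
  finally show ?thesis .
qed

lemma phi3_zero:
  assumes "phi3 g t s = 0"
  shows "alpha g t s = 0" "beta1 g t s + beta2 g t s = 0"
proof -
  have r: "rr g t s \<noteq> 0" using cmod_rr[of g t s] by auto
  have q: "qq g t s \<noteq> 0" using cmod_qq[of g t s] by auto
  have "complex_of_real (2 * alpha g t s) + \<i> * complex_of_real (beta1 g t s + beta2 g t s) = 0"
    using assms r q by (simp add: phi3_def)
  then have "Re (complex_of_real (2 * alpha g t s) + \<i> * complex_of_real (beta1 g t s + beta2 g t s)) = 0"
    "Im (complex_of_real (2 * alpha g t s) + \<i> * complex_of_real (beta1 g t s + beta2 g t s)) = 0"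
    by simp_all
  then show "alpha g t s = 0" "beta1 g t s + beta2 g t s = 0" by simp_all
qed

lemma trig:
  fixes X n k :: real
  assumes n: "n > 0" and k: "k > 0"
  shows "sin (arccos ((- X / n) / sqrt ((- X / n)\<^sup>2 + 9/4 * k\<^sup>2))) * X
       + cos (arccos ((- X / n) / sqrt ((- X / n)\<^sup>2 + 9/4 * k\<^sup>2))) * (3/2 * n * k) = 0"
proof -
  define h where "h = - X / n"
  define R where "R = sqrt (h\<^sup>2 + 9/4 * k\<^sup>2)"
  have R2: "R\<^sup>2 = h\<^sup>2 + 9/4 * k\<^sup>2" unfolding R_def by (simp add: add_nonneg_nonneg)
  have Rp: "R > 0" unfolding R_def using k by (simp add: add_nonneg_pos)
  have "sqrt (h\<^sup>2) \<le> R" unfolding R_def by (rule real_sqrt_le_mono) simp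
  then have hR: "\<bar>h\<bar> \<le> R" by simp
  have u1: "-1 \<le> h / R" "h / R \<le> 1" using hR Rp by (auto simp: divide_simps abs_le_iff)
  have c: "cos (arccos (h / R)) = h / R" using u1 by (simp add: cos_arccos)
  have "1 - (h / R)\<^sup>2 = (R\<^sup>2 - h\<^sup>2) / R\<^sup>2" using Rp by (simp add: field_simps)
  also have "\<dots> = (9/4 * k\<^sup>2) / R\<^sup>2" using R2 by simp
  also have "\<dots> = (3/2 * k / R)\<^sup>2" by (simp add: power_divide power_mult_distrib)
  finally have "1 - (h / R)\<^sup>2 = (3/2 * k / R)\<^sup>2" .
  then have s: "sin (arccos (h / R)) = 3/2 * k / R"
    using u1 k Rp by (simp add: sin_arccos)
  have "sin (arccos (h / R)) * X + cos (arccos (h / R)) * (3/2 * n * k) = 0"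
    unfolding s c using n by (simp add: h_def field_simps)
  then show ?thesis by (simp add: h_def R_def)
qed


context fixt begin

lemma Ceq: "\<sigma> \<in> S \<Longrightarrow> ps (ps (ps g)) t \<sigma> =
   (inner (ps (ps g) t \<sigma>) (ps (ps (ps g)) t \<sigma>) / norm (ps (ps g) t \<sigma>)) *\<^sub>R I1 g t \<sigma>
   + norm (ps (ps g) t \<sigma>) *\<^sub>R ps (I1 g) t \<sigma>"
proof -
  assume s: "\<sigma> \<in> S"
  define n where "n = norm (ps (ps g) t \<sigma>)"
  define x where "x = inner (ps (ps g) t \<sigma>) (ps (ps (ps g)) t \<sigma>)"
  have n0: "n \<noteq> 0" using Bnz[OF s] by (simp add: n_def)
  have c1: "x / n * (1 / n) = n * (x / n ^ 3)" using n0 by (simp add: power3_eq_cube field_simps)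
  have c2: "n * (1 / n) = 1" using n0 by simp
  have c3: "n * x / n ^ 3 = x / (n * n)" using n0 by (simp add: power3_eq_cube)
  show ?thesis
    unfolding Peq[OF s] I1_eq n_def[symmetric] x_def[symmetric]
    by (simp add: scaleR_diff_right scaleR_scaleR c1 c2 c3 n0)
qed

lemma hn: "\<sigma> \<in> S \<Longrightarrow> ((\<lambda>\<sigma>. norm (ps (ps g) t \<sigma>)) has_vector_derivative
   inner (ps (ps g) t \<sigma>) (ps (ps (ps g)) t \<sigma>) / norm (ps (ps g) t \<sigma>)) (at \<sigma>)"
  using has_vd_norm[OF hB Bnz0] by (simp add: has_real_derivative_iff_has_vector_derivative)

lemma he: "\<sigma> \<in> S \<Longrightarrow> ((\<lambda>\<sigma>. inner (ps (ps g) t \<sigma>) (ps (ps (ps g)) t \<sigma>) / norm (ps (ps g) t \<sigma>))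
   has_vector_derivative vector_derivative (\<lambda>\<sigma>. inner (ps (ps g) t \<sigma>) (ps (ps (ps g)) t \<sigma>) / norm (ps (ps g) t \<sigma>)) (at \<sigma>)) (at \<sigma>)"
proof -
  assume s: "\<sigma> \<in> S"
  have nz: "norm (ps (ps g) t \<sigma>) \<noteq> 0" using Bnz[OF s] by simp
  show ?thesis by (rule vd_diff[OF differentiable_divide[OF bbi[OF dB[OF s] dC[OF s]] dnB[OF s] nz]])
qed

lemma Deq: "s \<in> S \<Longrightarrow> ps (ps (ps (ps g))) t s =
   (inner (ps (ps g) t s) (ps (ps (ps g)) t s) / norm (ps (ps g) t s)) *\<^sub>R ps (I1 g) t s
   + vector_derivative (\<lambda>\<sigma>. inner (ps (ps g) t \<sigma>) (ps (ps (ps g)) t \<sigma>) / norm (ps (ps g) t \<sigma>)) (at s) *\<^sub>R I1 g t s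
   + (norm (ps (ps g) t s) *\<^sub>R ps (ps (I1 g)) t s
   + (inner (ps (ps g) t s) (ps (ps (ps g)) t s) / norm (ps (ps g) t s)) *\<^sub>R ps (I1 g) t s)"
  by (rule deriv_eq_on[OF S(1) _ Ceq hC has_vector_derivative_add[OF scaleR_vd[OF he ha2] scaleR_vd[OF hn hP]]])

lemma P2eq: "s \<in> S \<Longrightarrow> ps (ps (I1 g)) t s =
   (kappa2 g t s *\<^sub>R ps (I2 g) t s + vector_derivative (\<lambda>\<sigma>. kappa2 g t \<sigma>) (at s) *\<^sub>R I2 g t s)
 + ((- norm (ps (ps g) t s)) *\<^sub>R ps (ps g) t s
    + vector_derivative (\<lambda>\<sigma>. inner (ps (I1 g) t \<sigma>) (ps g t \<sigma>)) (at s) *\<^sub>R ps g t s)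
 + (inner (ps (I1 g) t s) (ocross (I1 g t s) (ps g t s)) *\<^sub>R
      (ocross (I1 g t s) (ps (ps g) t s) + ocross (ps (I1 g) t s) (ps g t s))
    + vector_derivative (\<lambda>\<sigma>. inner (ps (I1 g) t \<sigma>) (I5 g t \<sigma>)) (at s) *\<^sub>R ocross (I1 g t s) (ps g t s))"
proof -
  assume s: "s \<in> S"
  have hp: "((\<lambda>\<sigma>. inner (ps (I1 g) t \<sigma>) (ps g t \<sigma>)) has_vector_derivative
     vector_derivative (\<lambda>\<sigma>. inner (ps (I1 g) t \<sigma>) (ps g t \<sigma>)) (at s)) (at s)"
    by (rule vd_diff[OF bbi[OF dP[OF s] dc[OF s]]])
  have hr: "((\<lambda>\<sigma>. inner (ps (I1 g) t \<sigma>) (I5 g t \<sigma>)) has_vector_derivative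
     vector_derivative (\<lambda>\<sigma>. inner (ps (I1 g) t \<sigma>) (I5 g t \<sigma>)) (at s)) (at s)"
    by (rule vd_diff[OF bbi[OF dP[OF s] dI5[OF s]]])
  have "ps (ps (I1 g)) t s =
   (kappa2 g t s *\<^sub>R ps (I2 g) t s + vector_derivative (\<lambda>\<sigma>. kappa2 g t \<sigma>) (at s) *\<^sub>R I2 g t s)
 + (inner (ps (I1 g) t s) (ps g t s) *\<^sub>R ps (ps g) t s
    + vector_derivative (\<lambda>\<sigma>. inner (ps (I1 g) t \<sigma>) (ps g t \<sigma>)) (at s) *\<^sub>R ps g t s)
 + (inner (ps (I1 g) t s) (I5 g t s) *\<^sub>R
      (ocross (I1 g t s) (ps (ps g) t s) + ocross (ps (I1 g) t s) (ps g t s))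
    + vector_derivative (\<lambda>\<sigma>. inner (ps (I1 g) t \<sigma>) (I5 g t \<sigma>)) (at s) *\<^sub>R I5 g t s)"
    by (rule deriv_eq_on[OF S(1) s Pdec hP[OF s] has_vector_derivative_add[OF has_vector_derivative_add[OF
        scaleR_vd[OF hK[OF s] hb[OF s]] scaleR_vd[OF hp hc[OF s]]] scaleR_vd[OF hr hI5[OF s]]]])
  then show ?thesis by (simp only: Pc[OF s] I5_eq)
qed

end


context fixt begin

lemma main:
  assumes s: "s \<in> S" and ph: "phi3 g t s = 0"
  shows "\<forall>i\<in>{1,2}. \<forall>j\<in>{1,2}. hcoef g (Etil g) 6 i j t s = 0 \<and> hcoef g (Etil g) 7 i j t s = 0"
proof -
  interpret fr: frame "I1 g t s" "I2 g t s" "ps g t s" by (rule frame_at[OF s])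
  have al: "inner (ps (I2 g) t s) (ocross (I1 g t s) (I2 g t s)) = 0"
    using phi3_zero(1)[OF ph] by (simp add: alpha_def oinner_eq I3_def)
  have be: "inner (ps (I2 g) t s) (ocross (ocross (I1 g t s) (I2 g t s)) (ps g t s)) +
     inner (ocross (I1 g t s) (ps (I2 g) t s) + ocross (ps (I1 g) t s) (I2 g t s)) (ocross (I2 g t s) (ps g t s)) = 0"
    using phi3_zero(2)[OF ph] by (simp add: beta1_def beta2_def oinner_eq I7_def I6_def I3_def I4_eq hI3[OF s])
  have Pform: "ps (I1 g) t s = kappa2 g t s *\<^sub>R I2 g t s + (- norm (ps (ps g) t s)) *\<^sub>R ps g t s
      + inner (ps (I1 g) t s) (ocross (I1 g t s) (ps g t s)) *\<^sub>R ocross (I1 g t s) (ps g t s)"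
    using Pdec[OF s] by (simp only: Pc[OF s] I5_eq)
  note FA = fr.final_alg[where \<mu> = "inner (ps (ps g) t s) (pt (ps (ps g)) t s) / norm (ps (ps g) t s) ^ 3",
     OF IQ[OF s] Bnz[OF s] Qb[OF s] al be Pform Bna[OF s] Ceq[OF s] refl P2eq[OF s] Deq[OF s]
        ptps[OF s] ptB[OF s] refl refl]
  define a where "a = I1 g t s"
  define b where "b = I2 g t s"
  define c where "c = ps g t s"
  define B where "B = ps (ps g) t s"
  define I5d where "I5d = ocross (I1 g t s) (ps (ps g) t s) + ocross (ps (I1 g) t s) (ps g t s)"
  define V where "V = ocross (I1 g t s) (pt (ps g) t s) +
   ocross ((1 / norm (ps (ps g) t s)) *\<^sub>R pt (ps (ps g)) t s -
      (inner (ps (ps g) t s) (pt (ps (ps g)) t s) / norm (ps (ps g) t s) ^ 3) *\<^sub>R ps (ps g) t s) (ps g t s)"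
  define ptc where "ptc = pt (ps g) t s"
  define n where "n = norm (ps (ps g) t s)"
  define K where "K = kappa2 g t s"
  have n: "n > 0" using Bnz[OF s] by (simp add: n_def)
  have K: "K > 0" using Kpos[OF s] by (simp add: K_def)
  note FA' = FA[folded a_def b_def c_def B_def I5d_def V_def ptc_def n_def K_def]
  have E1: "Etil g 1 = I4 g" "Etil g (Suc 0) = I4 g" by (simp_all add: Etil_def Efr_def)
  have E2: "Etil g 2 = (\<lambda>t s. - I5 g t s)" by (simp add: Etil_def Efr_def)
  have F2: "Efr g 2 = (\<lambda>t s. - I5 g t s)" by (simp add: Efr_def)
  have E6: "Etil g 6 = I3 g" by (simp add: Etil_def Efr_def)
  have F4: "Efr g 4 = I2 g" by (simp add: Efr_def)
  have E7: "Etil g 7 t s = sin (theta g t s) *\<^sub>R b + cos (theta g t s) *\<^sub>R ocross (ocross a b) c"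
    by (simp add: Etil_def Efr_def I7_def I3_def I4_eq a_def b_def c_def)
  have E6v: "I3 g t s = ocross a b" by (simp add: I3_def a_def b_def)
  have psE1: "ps (I4 g) t s = B" by (simp add: I4_eq B_def)
  have ptE1: "pt (I4 g) t s = ptc" by (simp add: I4_eq ptc_def)
  have psE2: "ps (\<lambda>t s. - I5 g t s) t s = - I5d"
    unfolding ps_def[of "\<lambda>t s. - I5 g t s"] I5d_def by (rule vector_derivative_at[OF has_vector_derivative_minus[OF hI5[OF s]]])
  have ptE2: "pt (\<lambda>t s. - I5 g t s) t s = - V"
    unfolding pt_def[of "\<lambda>t s. - I5 g t s"] V_def by (rule vector_derivative_at[OF has_vector_derivative_minus[OF ptI5[OF s]]])
  have w: "w2 g t s = n" using n by (simp add: w2_eq k1_eq n_def)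
  have nz: "n \<noteq> 0" using n by simp
  have h4: "hcoef g (Efr g) 4 2 2 t s = - inner V b / n"
    by (simp add: hcoef_def F2 F4 ptE2 w oinner_eq b_def)
  have ph2: "cmod (phi2 g t s) = K" using K by (simp add: phi2_norm K_def)
  have th: "theta g t s = arccos ((- inner V b / n) / sqrt ((- inner V b / n)\<^sup>2 + 9/4 * K\<^sup>2))"
    unfolding theta_def h4 ph2 ..
  have tr: "sin (theta g t s) * inner V b + cos (theta g t s) * (3/2 * n * K) = 0"
    unfolding th using trig[OF n K, of "inner V b"] by simp
  have h611: "hcoef g (Etil g) 6 1 1 t s = 0"
    using FA'(9) by (simp add: hcoef_def E1 E6 E6v psE1 oinner_eq)
  have h711: "hcoef g (Etil g) 7 1 1 t s = 0"
    using FA'(10,11) by (simp add: hcoef_def E1 E7 psE1 oinner_eq inner_add_right)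
  have h621: "hcoef g (Etil g) 6 2 1 t s = 0"
    using FA'(6) by (simp add: hcoef_def E2 E6 E6v psE2 oinner_eq)
  have h721: "hcoef g (Etil g) 7 2 1 t s = 0"
    using FA'(7,8) by (simp add: hcoef_def E2 E7 psE2 oinner_eq inner_add_right)
  have h612: "hcoef g (Etil g) 6 1 2 t s = 0"
    using FA'(3) by (simp add: hcoef_def E1 E6 E6v ptE1 oinner_eq)
  have h712: "hcoef g (Etil g) 7 1 2 t s = 0"
    using FA'(4,5) by (simp add: hcoef_def E1 E7 ptE1 oinner_eq inner_add_right)
  have h622: "hcoef g (Etil g) 6 2 2 t s = 0"
    using FA'(1) by (simp add: hcoef_def E2 E6 E6v ptE2 oinner_eq)
  have h722: "hcoef g (Etil g) 7 2 2 t s = 0"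
  proof -
    have "hcoef g (Etil g) 7 2 2 t s = - (sin (theta g t s) * inner V b +
        cos (theta g t s) * inner V (ocross (ocross a b) c)) / w2 g t s"
      by (simp add: hcoef_def E2 E7 ptE2 oinner_eq inner_add_right)
    also have "\<dots> = 0"
    proof -
      have e: "inner V (ocross (ocross a b) c) = 3/2 * n * K" using FA'(2) .
      show ?thesis unfolding e tr by simp
    qed
    finally show ?thesis .
  qed
  show ?thesis using h611 h711 h621 h721 h612 h712 h622 h722 by auto
qed

end

theorem proposition4:
  fixes g :: "real \<Rightarrow> real \<Rightarrow> oct" and T S :: "real set"
  assumes T: "open T" "is_interval T" "T \<noteq> {}"
      and S: "open S" "is_interval S" "0 \<in> S"
      and smooth: "smooth2_on (T \<times> S) g"
      and im: "\<forall>t\<in>T. \<forall>s\<in>S. g t s \<in> ImO"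
      and eq: "\<forall>t\<in>T. \<forall>s\<in>S. pt g t s = ocross (ps g t s) (ps (ps g) t s)"
      and unit: "\<forall>t\<in>T. \<forall>s\<in>S. onorm (ps g t s) = 1"
      and k1pos: "\<forall>t\<in>T. \<forall>s\<in>S. k1 g t s > 0"
      and k2pos: "\<forall>t\<in>T. \<forall>s\<in>S. kappa2 g t s > 0"
      and phi3: "\<forall>t\<in>T. \<forall>s\<in>S. phi3 g t s = 0"
      and phi2: "\<forall>t\<in>T. \<forall>s\<in>S. phi2 g t s \<noteq> 0"
  shows "\<forall>t\<in>T. \<forall>s\<in>S. \<forall>i\<in>{1,2}. \<forall>j\<in>{1,2}.
           hcoef g (Etil g) 6 i j t s = 0 \<and> hcoef g (Etil g) 7 i j t s = 0"
proof -
  have "\<forall>i\<in>{1,2}. \<forall>j\<in>{1,2}. hcoef g (Etil g) 6 i j t s = 0 \<and> hcoef g (Etil g) 7 i j t s = 0"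
    if t: "t \<in> T" and s: "s \<in> S" for t s
  proof -
    interpret fixt g T S t
      using T(1) S(1,2) smooth im eq unit k1pos k2pos t by unfold_locales auto
    have ph: "phi3 g t s = 0" using phi3 t s by auto
    show ?thesis by (rule main[OF s ph])
  qed
  then show ?thesis by blast
qed

end
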